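(* Let $X$ be a real random variable such that $\mathbb{E}(|X|^{2p})\le2^{p+1}p!$ for every integer $p\ge1$. Then for all $\lambda\in\mathbb{R}$ the series below converges and $$1+\sum_{k=2}^\infty\frac{\lambda^k}{k!}\mathbb{E}(|X|^k)\le\exp(9\lambda^2/4).$$ *)

theory Defs
  imports "HOL-Probability.Probability"
begin

end

theory Submission
  imports Defs "HOL-Probability.Probability"
begin

lemma fact_double: "2^n * (fact n)^2 \<le> (fact (2*n) :: real)"
proof (induction n)
  case 0 then show ?case by simp
next
  case (Suc n)
  have e: "fact (2 * Suc n) = (2*real n+2)*(2*real n+1)*(fact (2*n)::real)"
    by (simp add: algebra_simps)
  have "2 ^ Suc n * (fact (Suc n))^2 = 2*(real n+1)^2 * (2^n*(fact n)^2::real)"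
    by (simp add: algebra_simps power2_eq_square)
  also have "\<dots> \<le> 2*(real n+1)^2 * fact (2*n)"
    using Suc by (intro mult_left_mono) auto
  also have "\<dots> \<le> (2*real n+2)*(2*real n+1)*(fact (2*n)::real)"
    by (intro mult_right_mono) (auto simp: power2_eq_square algebra_simps)
  finally show ?case unfolding e .
qed

lemma pow94: "2*(17/16 + (4*real r+12)/3) \<le> (9/4::real)^(r+3)"
proof (induction r)
  case 0 then show ?case by (simp add: eval_nat_numeral)
next
  case (Suc r)
  have h: "(9/4::real)^(Suc r+3) = 9/4 * (9/4)^(r+3)" by (metis add_Suc power_Suc)
  have h2: "2*(17/16 + (4*real (Suc r)+12)/3) = 2*(17/16 + (4*real r+12)/3) + 8/3" by (simp add: field_simps)
  have h3: "2*(17/16 + (4*real r+12)/3) \<ge> 10"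
  proof -
    have "real r \<ge> 0" by simp
    then show ?thesis by (simp add: field_simps)
  qed
  have g: "\<And>X Y::real. X \<le> Y \<Longrightarrow> 10 \<le> X \<Longrightarrow> X + 8/3 \<le> 9/4*Y" by linarith
  show ?case unfolding h h2 using g[OF Suc h3] .
qed

lemma numeric:
  "2^(q+2)*fact(q+1)*(1/fact(2*q+2) + 3/(8*fact(2*q+3)) + (if q=0 then 0 else 2/(3*fact(2*q+1))))
     \<le> (9/4::real)^(q+1)/fact(q+1)"
proof -
  have "q = 0 \<or> q = 1 \<or> (\<exists>r. q = r+2)" by presburger
  then consider "q=0" | "q=1" | r where "q = r+2" by blast
  then show ?thesis
  proof cases
    case 1 then show ?thesis by (simp add: fact_numeral)
  next
    case 2 then show ?thesis by (simp add: fact_numeral)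
  next
    case 3
    define F where "F = (fact (2*q+2)::real)"
    have Fpos: "F > 0" unfolding F_def by simp
    have s3: "2*q+3 = Suc(2*q+2)" "2*q+2 = Suc(2*q+1)" by simp_all
    have f3: "fact(2*q+3) = (2*real q+3) * F" unfolding F_def s3(1) fact_Suc
      by (simp add: algebra_simps)
    have f1: "F = (2*real q+2) * fact(2*q+1)" unfolding F_def s3(2) fact_Suc
      by (simp add: algebra_simps)
    have qn: "q \<noteq> 0" using 3 by simp
    have g: "1/fact(2*q+2) + 3/(8*fact(2*q+3)) + (if q=0 then 0 else 2/(3*fact(2*q+1)))
       = (1 + 3/(8*(2*real q+3)) + 2*(2*real q+2)/3) / F"
    proof -
      have p1: "2*real q+3 > 0" "2*real q+2 > 0" by simp_all
      have f1': "fact(2*q+1) = F/(2*real q+2)" using f1 by (simp add: field_simps)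
      have t2: "3/(8*((2*real q+3)*F)) = (3/(8*(2*real q+3)))/F" by simp
      have t3: "2/(3*(F/(2*real q+2))) = (2*(2*real q+2)/3)/F" using Fpos p1 by (simp add: field_simps)
      show ?thesis unfolding F_def[symmetric] f3 f1' using qn
        by (simp only: t2 t3 if_False add_divide_distrib[symmetric])
    qed
    have b1: "1 + 3/(8*(2*real q+3)) + 2*(2*real q+2)/3 \<le> 17/16 + (4*real r+12)/3"
      using 3 by (simp add: field_simps)
    have fd: "2^(q+1)*(fact(q+1))^2 \<le> F" unfolding F_def using fact_double[of "q+1"] by simp
    have "2^(q+2)*fact(q+1)*((1 + 3/(8*(2*real q+3)) + 2*(2*real q+2)/3) / F)
        \<le> 2^(q+2)*fact(q+1)*((17/16 + (4*real r+12)/3) / (2^(q+1)*(fact(q+1))^2))"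
      apply (intro mult_left_mono frac_le) using b1 fd by auto
    also have "\<dots> = 2*(17/16 + (4*real r+12)/3) / fact(q+1)"
    proof -
      have gen: "\<And>a b K::real. a > 0 \<Longrightarrow> b > 0 \<Longrightarrow> (2*a)*b*(K/(a*b^2)) = 2*K/b"
        by (simp add: power2_eq_square field_simps)
      have e2: "(2::real)^(q+2) = 2*2^(q+1)" by simp
      show ?thesis unfolding e2 by (rule gen) auto
    qed
    also have "\<dots> \<le> (9/4)^(q+1)/fact(q+1)"
    proof -
      have qr: "q+1 = r+3" using 3 by simp
      show ?thesis unfolding qr by (intro divide_right_mono pow94) simp
    qed
    finally show ?thesis using g by simp
  qed
qed

lemma amgm: "(t::real) \<ge> 0 \<Longrightarrow> t^(n+1) \<le> (3/4*t^n + 4/3*t^(n+2))/2"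
proof -
  assume t: "t \<ge> 0"
  have "0 \<le> t^n * (4/3*(t-3/4)^2)" using t by simp
  also have "\<dots> = 2*((3/4*t^n + 4/3*t^(n+2))/2 - t^(n+1))"
    by (simp add: power2_eq_square algebra_simps power_add)
  finally show ?thesis by simp
qed

lemma partial_exp: "(x::real) \<ge> 0 \<Longrightarrow> (\<Sum>q<N. x^(q+1)/fact(q+1)) \<le> exp x - 1"
proof -
  assume x: "x \<ge> 0"
  have "(\<Sum>q<Suc N. x^q/fact q) = 1 + (\<Sum>q<N. x^(q+1)/fact(q+1))"
    by (subst sum.lessThan_Suc_shift) simp
  moreover have "(\<Sum>q<Suc N. x^q/fact q) \<le> exp x"
  proof -
    have s: "(\<lambda>n. x^n / fact n) sums exp x" using exp_converges[of x] by (simp add: divide_inverse_commute scaleR_conv_of_real)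
    show ?thesis using sum_le_suminf[OF sums_summable[OF s], of "{..<Suc N}"] sums_unique[OF s] x by auto
  qed
  ultimately show ?thesis by simp
qed


theorem lemma3:
  fixes M :: "'a measure" and X :: "'a \<Rightarrow> real" and l :: real
  assumes "prob_space M"
    and "X \<in> borel_measurable M"
    and "\<And>p::nat. p \<ge> 1 \<Longrightarrow>
           (\<integral>\<^sup>+ x. ennreal (\<bar>X x\<bar> ^ (2 * p)) \<partial>M) \<le> ennreal (2 ^ (p + 1) * fact p)"
  shows "summable (\<lambda>k. l ^ (k + 2) / fact (k + 2) * prob_space.expectation M (\<lambda>x. \<bar>X x\<bar> ^ (k + 2))) \<and>
         1 + (\<Sum>k. l ^ (k + 2) / fact (k + 2) * prob_space.expectation M (\<lambda>x. \<bar>X x\<bar> ^ (k + 2)))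
           \<le> exp (9 * l ^ 2 / 4)"
proof -
  interpret P: prob_space M by fact
  define m where "m k = integral\<^sup>L M (\<lambda>x. \<bar>X x\<bar> ^ k)" for k
  have meas: "(\<lambda>x. \<bar>X x\<bar> ^ k) \<in> borel_measurable M" for k using assms(2) by measurable
  have intE: "integrable M (\<lambda>x. \<bar>X x\<bar> ^ (2*p))" if p: "p \<ge> 1" for p
  proof (rule integrableI_bounded)
    show "(\<lambda>x. \<bar>X x\<bar> ^ (2*p)) \<in> borel_measurable M" by (rule meas)
    have "(\<integral>\<^sup>+ x. ennreal (norm (\<bar>X x\<bar> ^ (2 * p))) \<partial>M) = (\<integral>\<^sup>+ x. ennreal (\<bar>X x\<bar> ^ (2 * p)) \<partial>M)"
      by simp
    also have "\<dots> \<le> ennreal (2 ^ (p + 1) * fact p)" using assms(3)[OF p] .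
    also have "\<dots> < \<infinity>" by simp
    finally show "(\<integral>\<^sup>+ x. ennreal (norm (\<bar>X x\<bar> ^ (2 * p))) \<partial>M) < \<infinity>" .
  qed
  have mom: "m (2*p) \<le> 2^(p+1) * fact p" if p: "p \<ge> 1" for p
  proof -
    have "ennreal (m (2*p)) = (\<integral>\<^sup>+ x. ennreal (\<bar>X x\<bar> ^ (2 * p)) \<partial>M)"
      unfolding m_def by (rule nn_integral_eq_integral[symmetric]) (use intE[OF p] in auto)
    also have "\<dots> \<le> ennreal (2 ^ (p + 1) * fact p)" using assms(3)[OF p] .
    finally show ?thesis by (subst (asm) ennreal_le_iff) auto
  qed
  have intk: "integrable M (\<lambda>x. \<bar>X x\<bar> ^ k)" for k
  proof (rule Bochner_Integration.integrable_bound[where f="\<lambda>x. 1 + \<bar>X x\<bar> ^ (2*(k+1))"])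
    show "integrable M (\<lambda>x. 1 + \<bar>X x\<bar> ^ (2*(k+1)))"
      using intE[of "k+1"] by (intro Bochner_Integration.integrable_add) auto
    show "(\<lambda>x. \<bar>X x\<bar> ^ k) \<in> borel_measurable M" by (rule meas)
    show "AE x in M. norm (\<bar>X x\<bar> ^ k) \<le> norm (1 + \<bar>X x\<bar> ^ (2*(k+1)))"
    proof (intro AE_I2)
      fix x
      have "\<bar>X x\<bar> ^ k \<le> 1 + \<bar>X x\<bar> ^ (2*(k+1))"
      proof (cases "\<bar>X x\<bar> \<le> 1")
        case True
        then have "\<bar>X x\<bar> ^ k \<le> 1" by (simp add: power_le_one)
        then show ?thesis by (smt (verit) zero_le_power abs_ge_zero)
      next
        case False
        then have "\<bar>X x\<bar> ^ k \<le> \<bar>X x\<bar> ^ (2*(k+1))" by (intro power_increasing) auto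
        then show ?thesis by simp
      qed
      then show "norm (\<bar>X x\<bar> ^ k) \<le> norm (1 + \<bar>X x\<bar> ^ (2*(k+1)))" by simp
    qed
  qed
  have m_nn: "m k \<ge> 0" for k unfolding m_def by (rule integral_nonneg_AE) auto
  define v where "v = \<bar>l\<bar>"
  have v0: "v \<ge> 0" unfolding v_def by simp
  have am: "v^(n+1) * m(n+1) \<le> (3/4 * v^n * m n + 4/3 * v^(n+2) * m (n+2))/2" for n
  proof -
    have pt: "v^(n+1) * \<bar>X x\<bar>^(n+1) \<le> (3/4 * v^n * \<bar>X x\<bar>^n + 4/3 * v^(n+2) * \<bar>X x\<bar>^(n+2))/2" for x
      using amgm[of "v * \<bar>X x\<bar>" n] v0 by (simp add: power_mult_distrib mult_ac)
    have "integral\<^sup>L M (\<lambda>x. v^(n+1) * \<bar>X x\<bar>^(n+1)) \<le>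
          integral\<^sup>L M (\<lambda>x. (3/4 * v^n * \<bar>X x\<bar>^n + 4/3 * v^(n+2) * \<bar>X x\<bar>^(n+2))/2)"
      by (intro integral_mono pt integrable_divide_zero Bochner_Integration.integrable_add integrable_mult_right intk)
    moreover have e1: "integral\<^sup>L M (\<lambda>x. v^(n+1) * \<bar>X x\<bar>^(n+1)) = v^(n+1) * m(n+1)"
      unfolding m_def by (rule integral_mult_right_zero)
    moreover have e2: "integral\<^sup>L M (\<lambda>x. (3/4 * v^n * \<bar>X x\<bar>^n + 4/3 * v^(n+2) * \<bar>X x\<bar>^(n+2))/2)
       = (3/4 * v^n * m n + 4/3 * v^(n+2) * m (n+2))/2"
      unfolding m_def by (simp only: integral_divide_zero Bochner_Integration.integral_add[OF integrable_mult_right[OF intk] integrable_mult_right[OF intk]] integral_mult_right_zero)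
    ultimately show ?thesis by (simp only:)
  qed
  define f where "f k = l ^ (k + 2) / fact (k + 2) * m (k+2)" for k
  define b where "b k = v ^ (k + 2) / fact (k + 2) * m (k+2)" for k
  have fb: "\<bar>f k\<bar> = b k" for k
    unfolding f_def b_def v_def using m_nn[of "k+2"] by (simp add: abs_mult power_abs)
  have b0: "b k \<ge> 0" for k unfolding b_def using m_nn[of "k+2"] v0 by simp
  define w where "w P = v^(2*P) * m (2*P)" for P
  have wb: "w P \<le> (v^2)^P * (2^(P+1) * fact P)" if "P \<ge> 1" for P
    unfolding w_def using mom[OF that] v0 by (simp add: power_mult mult_left_mono)
  have w0: "w P \<ge> 0" for P unfolding w_def using m_nn v0 by simp
  define A where "A q = w(q+1)/fact(2*q+2) + 3/8*w(q+1)/fact(2*q+3)" for q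
  define B where "B q = 2/3*w(q+2)/fact(2*q+3)" for q
  define Bp where "Bp N = (case N of 0 \<Rightarrow> 0 | Suc r \<Rightarrow> B r)" for N
  define T where "T q = A q + Bp q" for q
  have beven: "b (2*q) = w(q+1)/fact(2*q+2)" for q
    unfolding b_def w_def by (simp add: algebra_simps)
  have bodd: "b (2*q+1) \<le> 3/8*w(q+1)/fact(2*q+3) + B q" for q
  proof -
    have "b (2*q+1) = v^(2*q+3) * m (2*q+3) / fact(2*q+3)" unfolding b_def by (simp add: numeral_3_eq_3)
    also have "\<dots> \<le> ((3/4 * v^(2*q+2) * m (2*q+2) + 4/3 * v^(2*q+4) * m (2*q+4))/2) / fact(2*q+3)"
      using am[of "2*q+2"] by (intro divide_right_mono) (simp_all add: numeral_3_eq_3 eval_nat_numeral)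
    also have "\<dots> = 3/8*w(q+1)/fact(2*q+3) + B q"
      unfolding w_def B_def by (simp add: algebra_simps add_divide_distrib eval_nat_numeral)
    finally show ?thesis .
  qed
  have claim: "(\<Sum>k<2*N. b k) \<le> (\<Sum>q<N. T q) + Bp N" for N
  proof (induction N)
    case 0 then show ?case by (simp add: Bp_def)
  next
    case (Suc N)
    have "(\<Sum>k<2*Suc N. b k) = (\<Sum>k<2*N. b k) + b (2*N) + b (2*N+1)" by simp
    also have "\<dots> \<le> (\<Sum>q<N. T q) + Bp N + A N + B N"
      using Suc beven[of N] bodd[of N] unfolding A_def by simp
    also have "\<dots> = (\<Sum>q<Suc N. T q) + Bp (Suc N)" by (simp add: T_def Bp_def)
    finally show ?case .
  qed
  define x where "x = 9 * l^2 / 4"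
  have x0: "x \<ge> 0" unfolding x_def by simp
  have Tb: "T q \<le> x^(q+1)/fact(q+1)" for q
  proof -
    have "T q = w(q+1) * (1/fact(2*q+2) + 3/(8*fact(2*q+3)) + (if q=0 then 0 else 2/(3*fact(2*q+1))))"
    proof (cases q)
      case 0 then show ?thesis by (simp add: T_def A_def Bp_def algebra_simps)
    next
      case (Suc r)
      have e1: "2*r+3 = 2*q+1" "r+2 = q+1" using Suc by simp_all
      have "Bp q = 2/3*w(r+2)/fact(2*r+3)" using Suc by (simp add: Bp_def B_def)
      then have "Bp q = 2/3*w(q+1)/fact(2*q+1)" unfolding e1 .
      then show ?thesis using Suc by (simp add: T_def A_def algebra_simps)
    qed
    also have "\<dots> \<le> ((v^2)^(q+1) * (2^(q+2) * fact (q+1))) * (1/fact(2*q+2) + 3/(8*fact(2*q+3)) + (if q=0 then 0 else 2/(3*fact(2*q+1))))"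
      using wb[of "q+1"] by (intro mult_right_mono) auto
    also have "\<dots> = (v^2)^(q+1) * (2^(q+2) * fact (q+1) * (1/fact(2*q+2) + 3/(8*fact(2*q+3)) + (if q=0 then 0 else 2/(3*fact(2*q+1)))))"
      by (simp only: mult.assoc)
    also have "\<dots> \<le> (v^2)^(q+1) * ((9/4)^(q+1)/fact(q+1))"
      by (intro mult_left_mono numeric) auto
    also have "\<dots> = x^(q+1)/fact(q+1)"
    proof -
      have xe: "x = (9/4) * (v^2)" unfolding x_def v_def by simp
      show ?thesis unfolding xe by (subst power_mult_distrib) (simp add: mult_ac)
    qed
    finally show ?thesis .
  qed
  have T0: "T q \<ge> Bp q" for q unfolding T_def A_def using w0 by simp
  have partial: "(\<Sum>k<n. b k) \<le> exp x - 1" for n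
  proof -
    have "(\<Sum>k<n. b k) \<le> (\<Sum>k<2*n. b k)" by (intro sum_mono2) (auto simp: b0)
    also have "\<dots> \<le> (\<Sum>q<n. T q) + Bp n" by (rule claim)
    also have "\<dots> \<le> (\<Sum>q<Suc n. T q)" using T0[of n] by simp
    also have "\<dots> \<le> (\<Sum>q<Suc n. x^(q+1)/fact(q+1))" by (intro sum_mono Tb)
    also have "\<dots> \<le> exp x - 1" by (rule partial_exp[OF x0])
    finally show ?thesis .
  qed
  have sb: "summable b" by (rule summableI_nonneg_bounded[OF b0 partial])
  have sfa: "summable (\<lambda>n. \<bar>f n\<bar>)" using sb by (simp only: fb)
  have sf: "summable f" by (rule summable_rabs_cancel[OF sfa])
  have "suminf f \<le> \<bar>suminf f\<bar>" by (rule abs_ge_self)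
  also have "\<dots> \<le> (\<Sum>n. \<bar>f n\<bar>)" by (rule summable_rabs[OF sfa])
  also have "\<dots> = suminf b" by (simp only: fb)
  also have "\<dots> \<le> exp x - 1" by (rule suminf_le_const[OF sb partial])
  finally have fin: "1 + suminf f \<le> exp x" by linarith
  have eq: "f = (\<lambda>k. l ^ (k + 2) / fact (k + 2) * prob_space.expectation M (\<lambda>x. \<bar>X x\<bar> ^ (k + 2)))"
    by (rule ext) (simp only: f_def m_def)
  show ?thesis using sf fin unfolding eq x_def by (rule conjI)
qed

end
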